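(* Let $c$ be continuous and bounded on $[0,\infty)\times\mathbb{R}$ and let $v_0$ be continuous on $\mathbb{R}$ and vanishing at infinity. Fix $t>0$ and an integer $n\ge1$, and let $v_n^{(t)}$ be the function on $[0,t]\times\mathbb{R}$ constructed as follows. Set $\tau_k=\frac{kt}{2n}$, $k=0,\dots,2n$, and $v_n^{(t)}(0,\cdot)=v_0$; for $k=0,\dots,n-1$, define inductively $$v_n^{(t)}(\tau,x)=\big(U_{2(\tau-\tau_{2k})}v_n^{(t)}(\tau_{2k},\cdot)\big)(x)\quad\text{for }\tau\in[\tau_{2k},\tau_{2k+1}],$$ $$v_n^{(t)}(\tau,x)=e^{-2c(\tau_{2k+2},x)(\tau-\tau_{2k+1})}\,v_n^{(t)}(\tau_{2k+1},x)\quad\text{for }\tau\in[\tau_{2k+1},\tau_{2k+2}],$$ where $U_0$ is the identity and, for $s>0$, $$(U_sf)(x)=\int_{\mathbb{R}}\frac{1}{\sqrt{2\pi\,\mathrm{sh}(2s)}}\exp\Big(-\frac12\Big((x^2+z^2)\frac{\mathrm{ch}(2s)}{\mathrm{sh}(2s)}-\frac{2xz}{\mathrm{sh}(2s)}\Big)\Big)f(z)\,dz.$$ Then for all real $x$, with the convention $\sigma_0=0$, $$\begin{aligned}v_n^{(t)}(t,x)=\int_{\mathbb{R}^n}&(2\pi\,\mathrm{sh}(2t/n))^{-n/2}\,v_0\Big(\sigma_n+\frac{x}{\mathrm{ch}(2t/n)^n}\Big)\exp\Big(-\frac12\frac{\mathrm{ch}(2t/n)}{\mathrm{sh}(2t/n)}\sum_{j=1}^n\Big(\sigma_{n-j+1}-\frac{\sigma_{n-j}}{\mathrm{ch}(2t/n)}\Big)^2\Big)\\&\exp\Big(-\frac12\frac{\mathrm{sh}(2t/n)}{\mathrm{ch}(2t/n)}\sum_{j=1}^n\Big(\sigma_{n-j}+\frac{x}{\mathrm{ch}(2t/n)^{n-j}}\Big)^2\Big)\exp\Big(-\frac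 tn\sum_{j=1}^n c\Big(\frac{jt}{n},\sigma_{n-j}+\frac{x}{\mathrm{ch}(2t/n)^{n-j}}\Big)\Big)\,d\sigma_1\cdots d\sigma_n.\end{aligned}$$
   Context: $\mathrm{ch}$ and $\mathrm{sh}$ denote the hyperbolic cosine and sine. The operators $U_s$ (Mehler's formula) form the heat semigroup of the harmonic oscillator $-\partial_x^2+x^2$. *)

theory Defs
  imports "HOL-Analysis.Analysis"
begin

definition mehler_kernel :: "real \<Rightarrow> real \<Rightarrow> real \<Rightarrow> real" where
  "mehler_kernel s x z =
     1 / sqrt (2 * pi * sinh (2 * s)) *
     exp (- (1/2) * ((x\<^sup>2 + z\<^sup>2) * cosh (2 * s) / sinh (2 * s) - 2 * x * z / sinh (2 * s)))"

definition U :: "real \<Rightarrow> (real \<Rightarrow> real) \<Rightarrow> real \<Rightarrow> real" where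
  "U s f x = (if s = 0 then f x else (LINT z|lborel. mehler_kernel s x z * f z))"

definition tau :: "real \<Rightarrow> nat \<Rightarrow> nat \<Rightarrow> real" where
  "tau t n k = real k * t / (2 * real n)"

text \<open>Value of v_n^(t) at time tau_{2k}.\<close>
primrec vgrid :: "(real \<Rightarrow> real) \<Rightarrow> (real \<Rightarrow> real \<Rightarrow> real) \<Rightarrow> real \<Rightarrow> nat \<Rightarrow> nat \<Rightarrow> real \<Rightarrow> real" where
  "vgrid v0 c t n 0 = v0"
| "vgrid v0 c t n (Suc k) = (\<lambda>x.
     exp (- 2 * c (tau t n (2*k+2)) x * (tau t n (2*k+2) - tau t n (2*k+1))) *
     U (2 * (tau t n (2*k+1) - tau t n (2*k))) (vgrid v0 c t n k) x)"

definition vn :: "(real \<Rightarrow> real) \<Rightarrow> (real \<Rightarrow> real \<Rightarrow> real) \<Rightarrow> real \<Rightarrow> nat \<Rightarrow> real \<Rightarrow> real \<Rightarrow> real" where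
  "vn v0 c t n s x =
     (let k = min (n - 1) (nat \<lfloor>s * real n / t\<rfloor>) in
      if s \<le> tau t n (2*k+1)
      then U (2 * (s - tau t n (2*k))) (vgrid v0 c t n k) x
      else exp (- 2 * c (tau t n (2*k+2)) x * (s - tau t n (2*k+1))) *
           U (2 * (tau t n (2*k+1) - tau t n (2*k))) (vgrid v0 c t n k) x)"

end

theory Submission
  imports Defs "HOL-Probability.Probability"
begin

definition sg :: "(nat \<Rightarrow> real) \<Rightarrow> nat \<Rightarrow> real" where
  "sg s j = (if j = 0 then 0 else s j)"

primrec W :: "real \<Rightarrow> (real\<Rightarrow>real) \<Rightarrow> (nat\<Rightarrow>real\<Rightarrow>real) \<Rightarrow> nat \<Rightarrow> real \<Rightarrow> real" where
  "W h g cc 0 = g"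
| "W h g cc (Suc k) = (\<lambda>x. exp (- h * cc (Suc k) x) * U h (W h g cc k) x)"

lemma W_shift: "W h g cc (Suc k) = W h (W h g cc 1) (\<lambda>j. cc (Suc j)) k"
  by (induction k) auto

definition Dg :: "real \<Rightarrow> real \<Rightarrow> nat \<Rightarrow> (nat \<Rightarrow> real) \<Rightarrow> real" where
  "Dg a b m s = exp (-(1/2)*(a/b)*(\<Sum>i<m. (sg s (i+1) - sg s i/a)\<^sup>2))"

definition Phi :: "real \<Rightarrow> real \<Rightarrow> real \<Rightarrow> (real\<Rightarrow>real) \<Rightarrow> (nat \<Rightarrow> real \<Rightarrow> real) \<Rightarrow> nat \<Rightarrow> real \<Rightarrow> (nat \<Rightarrow> real) \<Rightarrow> real" where
  "Phi h a b g cc m x s = (2*pi*b) powr (-(real m/2)) * g (sg s m + x/a^m) * Dg a b m s *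
     exp(-(1/2)*(b/a)*(\<Sum>i<m. (sg s i + x/a^i)\<^sup>2)) * exp(-h*(\<Sum>i<m. cc (m-i) (sg s i + x/a^i)))"

lemma gauss_eq:
  fixes a b w \<mu> :: real
  assumes "a > 0" "b > 0"
  shows "exp(-(1/2)*(a/b)*(w-\<mu>)\<^sup>2) = sqrt(2*pi*b/a) * normal_density \<mu> (sqrt(b/a)) w"
  using assms by (simp add: normal_density_def real_sqrt_mult real_sqrt_divide field_simps)

lemma gauss_integrable:
  fixes a b \<mu> :: real
  assumes "a > 0" "b > 0"
  shows "integrable lborel (\<lambda>w. exp(-(1/2)*(a/b)*(w-\<mu>)\<^sup>2))"
  unfolding gauss_eq[OF assms] using assms by (intro integrable_mult_right integrable_normal_density) simp

lemma gauss_nn: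
  fixes a b \<mu> :: real
  assumes "a > 0" "b > 0"
  shows "(\<integral>\<^sup>+w. ennreal (exp(-(1/2)*(a/b)*(w-\<mu>)\<^sup>2)) \<partial>lborel) = ennreal (sqrt(2*pi*b/a))"
proof -
  have "(\<integral>\<^sup>+w. ennreal (exp(-(1/2)*(a/b)*(w-\<mu>)\<^sup>2)) \<partial>lborel)
      = ennreal (integral\<^sup>L lborel (\<lambda>w. exp(-(1/2)*(a/b)*(w-\<mu>)\<^sup>2)))"
    by (rule nn_integral_eq_integral[OF gauss_integrable[OF assms]]) simp
  also have "integral\<^sup>L lborel (\<lambda>w. exp(-(1/2)*(a/b)*(w-\<mu>)\<^sup>2)) = sqrt(2*pi*b/a)"
    unfolding gauss_eq[OF assms] by (simp only: integral_mult_right_zero) (use assms in simp)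
  finally show ?thesis .
qed

lemma psf: "product_sigma_finite (\<lambda>_::nat. lborel :: real measure)"
  by (simp add: product_sigma_finite_def sigma_finite_lborel)

lemma sg_meas[measurable]:
  "(\<lambda>s. sg s i) \<in> borel_measurable (PiM (insert i I) (\<lambda>_. lborel))"
  unfolding sg_def by (cases "i = 0") auto

lemma sg_meas0[measurable]:
  "(\<lambda>s. sg s 0) \<in> borel_measurable M"
  unfolding sg_def by simp

lemma mehler_split:
  assumes "a = cosh (2*h)" "b = sinh (2*h)" "h > 0"
  shows "mehler_kernel h y z = 1/sqrt(2*pi*b) * exp(-(1/2)*(a/b)*(z - y/a)\<^sup>2) * exp(-(1/2)*(b/a)*y\<^sup>2)"
proof -
  have b: "b > 0" using assms by simp
  have a: "a > 0" using assms by (simp add: cosh_real_pos)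
  have r: "a^2 = b^2 + 1" using assms cosh_square_eq by simp
  have e: "1/(a*b) + b/a = a/b" using a b r by (simp add: field_simps power2_eq_square) (metis distrib_right mult.assoc mult.commute mult_1)
  have "-(1/2)*(a/b)*(z - y/a)\<^sup>2 + -(1/2)*(b/a)*y\<^sup>2 = -(1/2)*(a/b*z\<^sup>2 - 2*z*y/b + y\<^sup>2*(1/(a*b) + b/a))"
    using a b by (simp add: field_simps power2_eq_square)
  also have "\<dots> = -(1/2)*((y\<^sup>2 + z\<^sup>2) * a / b - 2*y*z/b)" unfolding e by (simp add: field_simps add_divide_distrib)
  finally have "-(1/2)*((y\<^sup>2 + z\<^sup>2) * a / b - 2*y*z/b) = -(1/2)*(a/b)*(z - y/a)\<^sup>2 + -(1/2)*(b/a)*y\<^sup>2" ..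
  then show ?thesis unfolding mehler_kernel_def assms(1,2)[symmetric] by (simp add: exp_add[symmetric] exp_diff[symmetric])
qed


lemma sg_measI:
  "i = 0 \<or> i \<in> I \<Longrightarrow> (\<lambda>s. sg s i) \<in> borel_measurable (PiM I (\<lambda>_. lborel))"
  unfolding sg_def by (cases "i = 0") auto

lemma Dg_meas: "Dg a b m \<in> borel_measurable (PiM {1..m} (\<lambda>_. lborel))"
proof -
  have [measurable]: "\<And>i. i \<le> m \<Longrightarrow> (\<lambda>s. sg s i) \<in> borel_measurable (PiM {1..m} (\<lambda>_. lborel))"
    by (rule sg_measI) auto
  show ?thesis unfolding Dg_def by measurable
qed

lemma upd_sg:
  "i \<le> m \<Longrightarrow> sg (s(Suc m := w)) i = sg s i"
  "sg (s(Suc m := w)) (Suc m) = w"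
  by (auto simp: sg_def)

lemma Dg_step: "Dg a b (Suc m) (s(Suc m := w)) = Dg a b m s * exp(-(1/2)*(a/b)*(w - sg s m/a)\<^sup>2)"
proof -
  have "(\<Sum>i<m. (sg (s(Suc m:=w)) (i+1) - sg (s(Suc m:=w)) i/a)\<^sup>2) = (\<Sum>i<m. (sg s (i+1) - sg s i/a)\<^sup>2)"
    by (intro sum.cong) (auto simp: upd_sg)
  then show ?thesis unfolding Dg_def
    by (simp add: upd_sg exp_add[symmetric] algebra_simps)
qed

lemma Dg_nn:
  fixes a b :: real
  assumes a: "a > 0" and b: "b > 0"
  shows "(\<integral>\<^sup>+s. ennreal (Dg a b m s) \<partial>PiM {1..m} (\<lambda>_. lborel)) = ennreal (sqrt(2*pi*b/a) ^ m)"
proof (induction m)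
  case 0
  then show ?case by (simp add: PiM_empty Dg_def)
next
  case (Suc m)
  interpret product_sigma_finite "\<lambda>_::nat. lborel :: real measure" by (rule psf)
  have eq: "{1..Suc m} = insert (Suc m) {1..m}" by auto
  have "(\<integral>\<^sup>+s. ennreal (Dg a b (Suc m) s) \<partial>PiM {1..Suc m} (\<lambda>_. lborel))
      = (\<integral>\<^sup>+s. (\<integral>\<^sup>+w. ennreal (Dg a b (Suc m) (s(Suc m := w))) \<partial>lborel) \<partial>PiM {1..m} (\<lambda>_. lborel))"
    unfolding eq
    by (rule product_nn_integral_insert) (use Dg_meas[of a b "Suc m"] eq in auto)
  also have "\<dots> = (\<integral>\<^sup>+s. ennreal (Dg a b m s) * ennreal (sqrt(2*pi*b/a)) \<partial>PiM {1..m} (\<lambda>_. lborel))"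
  proof (rule nn_integral_cong)
    fix s :: "nat \<Rightarrow> real"
    have "(\<integral>\<^sup>+w. ennreal (Dg a b (Suc m) (s(Suc m := w))) \<partial>lborel)
        = (\<integral>\<^sup>+w. ennreal (Dg a b m s) * ennreal (exp(-(1/2)*(a/b)*(w - sg s m/a)\<^sup>2)) \<partial>lborel)"
      unfolding Dg_step by (intro nn_integral_cong) (simp add: ennreal_mult Dg_def)
    also have "\<dots> = ennreal (Dg a b m s) * ennreal (sqrt(2*pi*b/a))"
      using gauss_nn[OF a b, of "sg s m / a"] by (subst nn_integral_cmult) auto
    finally show "(\<integral>\<^sup>+w. ennreal (Dg a b (Suc m) (s(Suc m := w))) \<partial>lborel) = ennreal (Dg a b m s) * ennreal (sqrt(2*pi*b/a))" .
  qed
  also have "\<dots> = (\<integral>\<^sup>+s. ennreal (Dg a b m s) \<partial>PiM {1..m} (\<lambda>_. lborel)) * ennreal (sqrt(2*pi*b/a))"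
    by (rule nn_integral_multc) (use Dg_meas in auto)
  also have "\<dots> = ennreal (sqrt(2*pi*b/a) ^ Suc m)"
    unfolding Suc.IH using a b by (simp add: ennreal_mult[symmetric] mult.commute)
  finally show ?case .
qed

lemma Dg_integrable:
  fixes a b :: real
  assumes a: "a > 0" and b: "b > 0"
  shows "integrable (PiM {1..m} (\<lambda>_. lborel)) (Dg a b m)"
  by (rule integrableI_nn_integral_finite[OF Dg_meas _ Dg_nn[OF a b]]) (simp add: Dg_def)


lemma Phi_meas:
  assumes [measurable]: "g \<in> borel_measurable borel" "\<And>j. cc j \<in> borel_measurable borel"
  shows "Phi h a b g cc m x \<in> borel_measurable (PiM {1..m} (\<lambda>_. lborel))"
proof -
  have [measurable]: "\<And>i. i \<le> m \<Longrightarrow> (\<lambda>s. sg s i) \<in> borel_measurable (PiM {1..m} (\<lambda>_. lborel))"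
    by (rule sg_measI) auto
  have [measurable]: "Dg a b m \<in> borel_measurable (PiM {1..m} (\<lambda>_. lborel))" by (rule Dg_meas)
  show ?thesis unfolding Phi_def by measurable
qed

lemma Phi_bound:
  fixes a b h B C :: real
  assumes a: "a > 0" and b: "b > 0" and h: "h > 0"
    and gB: "\<And>y. \<bar>g y\<bar> \<le> B" and cC: "\<And>j y. \<bar>cc j y\<bar> \<le> C"
  shows "\<bar>Phi h a b g cc m x s\<bar> \<le> ((2*pi*b) powr (-(real m/2)) * B * exp (h * real m * C)) * Dg a b m s"
proof -
  let ?P = "(2*pi*b) powr (-(real m/2))"
  let ?E2 = "exp(-(1/2)*(b/a)*(\<Sum>i<m. (sg s i + x/a^i)\<^sup>2))"
  let ?E3 = "exp(-h*(\<Sum>i<m. cc (m-i) (sg s i + x/a^i)))"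
  have E2: "?E2 \<le> 1" using a b by (simp add: sum_nonneg)
  have "-h*(\<Sum>i<m. cc (m-i) (sg s i + x/a^i)) = h * (\<Sum>i<m. - cc (m-i) (sg s i + x/a^i))"
    by (simp add: sum_negf)
  also have "\<dots> \<le> h * (\<Sum>i<m. C)"
    using h cC by (intro mult_left_mono sum_mono) (auto simp: abs_le_iff)
  finally have E3: "?E3 \<le> exp (h * real m * C)" by simp
  have D0: "0 \<le> Dg a b m s" by (simp add: Dg_def)
  have B0: "0 \<le> B" using gB[of 0] by linarith
  have "\<bar>Phi h a b g cc m x s\<bar> = ?P * \<bar>g (sg s m + x/a^m)\<bar> * Dg a b m s * ?E2 * ?E3"
    unfolding Phi_def by (simp add: abs_mult D0)
  also have "\<dots> \<le> ?P * B * Dg a b m s * 1 * exp (h * real m * C)"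
    using gB E2 E3 D0 B0
    by (intro mult_mono) (auto intro!: mult_nonneg_nonneg)
  finally show ?thesis by (simp add: mult.assoc mult.commute mult.left_commute)
qed

lemma Phi_integrable:
  fixes a b h B C :: real
  assumes a: "a > 0" and b: "b > 0" and h: "h > 0"
    and gm: "g \<in> borel_measurable borel" and cm: "\<And>j. cc j \<in> borel_measurable borel"
    and gB: "\<And>y. \<bar>g y\<bar> \<le> B" and cC: "\<And>j y. \<bar>cc j y\<bar> \<le> C"
  shows "integrable (PiM {1..m} (\<lambda>_. lborel)) (Phi h a b g cc m x)"
proof -
  have i1: "integrable (PiM {1..m} (\<lambda>_. lborel)) (\<lambda>s. ((2*pi*b) powr (-(real m/2)) * B * exp (h * real m * C)) * Dg a b m s)"
    by (intro integrable_mult_right Dg_integrable a b)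
  have m1: "Phi h a b g cc m x \<in> borel_measurable (PiM {1..m} (\<lambda>_. lborel))" by (rule Phi_meas[OF gm cm])
  have ae1: "AE s in PiM {1..m} (\<lambda>_. lborel). norm (Phi h a b g cc m x s) \<le> norm (((2*pi*b) powr (-(real m/2)) * B * exp (h * real m * C)) * Dg a b m s)"
  proof (rule AE_I2)
    fix s
    have "\<bar>Phi h a b g cc m x s\<bar> \<le> ((2*pi*b) powr (-(real m/2)) * B * exp (h * real m * C)) * Dg a b m s"
      by (rule Phi_bound[OF a b h gB cC])
    then show "norm (Phi h a b g cc m x s) \<le> norm (((2*pi*b) powr (-(real m/2)) * B * exp (h * real m * C)) * Dg a b m s)"
      by simp
  qed
  show ?thesis by (rule Bochner_Integration.integrable_bound[OF i1 m1 ae1])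
qed


lemma gauss_int:
  fixes a b \<mu> :: real
  assumes "a > 0" "b > 0"
  shows "integral\<^sup>L lborel (\<lambda>w. exp(-(1/2)*(a/b)*(w-\<mu>)\<^sup>2)) = sqrt(2*pi*b/a)"
  unfolding gauss_eq[OF assms] by (simp only: integral_mult_right_zero) (use assms in simp)

lemma W1_meas:
  assumes [measurable]: "g \<in> borel_measurable borel" "cc 1 \<in> borel_measurable borel" and h: "h > 0"
  shows "W h g cc 1 \<in> borel_measurable borel"
proof -
  have [measurable]: "(\<lambda>y. U h g y) \<in> borel_measurable borel"
  proof -
    have "(\<lambda>y. LINT z|lborel. mehler_kernel h y z * g z) \<in> borel_measurable borel"
      by (rule lborel.borel_measurable_lebesgue_integral) (unfold mehler_kernel_def, measurable)
    then show ?thesis using h unfolding U_def by simp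
  qed
  have [measurable]: "cc (Suc 0) \<in> borel_measurable borel" using assms(2) by simp
  show ?thesis by simp
qed

lemma U_bound:
  fixes a b h B :: real
  assumes ab: "a = cosh (2*h)" "b = sinh (2*h)" and h: "h > 0"
    and gm: "g \<in> borel_measurable borel" and gB: "\<And>y. \<bar>g y\<bar> \<le> B"
  shows "\<bar>U h g y\<bar> \<le> B / sqrt(2*pi*b) * sqrt(2*pi*b/a)"
proof -
  have b: "b > 0" using ab h by simp
  have a: "a > 0" using ab by simp
  have B0: "0 \<le> B" using gB[of 0] by linarith
  let ?G = "\<lambda>z. exp(-(1/2)*(a/b)*(z-y/a)\<^sup>2)"
  have iG: "integrable lborel (\<lambda>z. B / sqrt(2*pi*b) * ?G z)"
    by (intro integrable_mult_right gauss_integrable a b)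
  have pw: "norm (mehler_kernel h y z * g z) \<le> B / sqrt(2*pi*b) * ?G z" for z
  proof -
    have E: "exp(-(1/2)*(b/a)*y\<^sup>2) \<le> 1" using a b by simp
    have "norm (mehler_kernel h y z * g z) = 1/sqrt(2*pi*b) * ?G z * exp(-(1/2)*(b/a)*y\<^sup>2) * \<bar>g z\<bar>"
      unfolding mehler_split[OF ab h] using b by (simp add: abs_mult)
    also have "\<dots> \<le> 1/sqrt(2*pi*b) * ?G z * 1 * B"
      using E gB[of z] b by (intro mult_mono) auto
    also have "\<dots> = B / sqrt(2*pi*b) * ?G z" by simp
    finally show ?thesis by simp
  qed
  have iK: "integrable lborel (\<lambda>z. mehler_kernel h y z * g z)"
  proof (rule Bochner_Integration.integrable_bound[OF iG])
    show "(\<lambda>z. mehler_kernel h y z * g z) \<in> borel_measurable lborel"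
      using gm unfolding mehler_kernel_def by measurable
    show "AE z in lborel. norm (mehler_kernel h y z * g z) \<le> norm (B / sqrt(2*pi*b) * ?G z)"
    proof (intro AE_I2)
      fix z
      have "norm (B / sqrt(2*pi*b) * ?G z) = B / sqrt(2*pi*b) * ?G z"
        using B0 b unfolding real_norm_def by (intro abs_of_nonneg) auto
      then show "norm (mehler_kernel h y z * g z) \<le> norm (B / sqrt(2*pi*b) * ?G z)"
        using pw[of z] by simp
    qed
  qed
  have "\<bar>U h g y\<bar> = norm (LINT z|lborel. mehler_kernel h y z * g z)" using h by (simp add: U_def)
  also have "\<dots> \<le> (LINT z|lborel. B / sqrt(2*pi*b) * ?G z)"
    by (rule Bochner_Integration.integral_norm_bound_integral[OF iK iG]) (use pw in auto)
  also have "\<dots> = B / sqrt(2*pi*b) * sqrt(2*pi*b/a)"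
    by (simp only: integral_mult_right_zero gauss_int[OF a b])
  finally show ?thesis .
qed

lemma W1_bound:
  fixes a b h B C :: real
  assumes ab: "a = cosh (2*h)" "b = sinh (2*h)" and h: "h > 0"
    and gm: "g \<in> borel_measurable borel" and gB: "\<And>y. \<bar>g y\<bar> \<le> B"
    and cC: "\<And>j y. \<bar>cc j y\<bar> \<le> C"
  shows "\<bar>W h g cc 1 y\<bar> \<le> exp (h * C) * (B / sqrt(2*pi*b) * sqrt(2*pi*b/a))"
proof -
  have "\<bar>W h g cc 1 y\<bar> = exp (- h * cc 1 y) * \<bar>U h g y\<bar>" by (simp add: abs_mult)
  also have "\<dots> \<le> exp (h * C) * (B / sqrt(2*pi*b) * sqrt(2*pi*b/a))"
  proof (intro mult_mono)
    show "exp (- h * cc 1 y) \<le> exp (h * C)"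
    proof -
      have "h * (- cc 1 y) \<le> h * C" using cC[of 1 y] h by (intro mult_left_mono) auto
      then show ?thesis by simp
    qed
  qed (use U_bound[OF ab h gm gB] in auto)
  finally show ?thesis .
qed


definition Qf :: "real \<Rightarrow> real \<Rightarrow> real \<Rightarrow> (nat \<Rightarrow> real \<Rightarrow> real) \<Rightarrow> nat \<Rightarrow> real \<Rightarrow> (nat \<Rightarrow> real) \<Rightarrow> real" where
  "Qf h a b cc m x s = (2*pi*b) powr (-(real m/2)) * Dg a b m s *
     exp(-(1/2)*(b/a)*(\<Sum>i<m. (sg s i + x/a^i)\<^sup>2)) *
     exp(-h*(\<Sum>i<m. cc (Suc m - i) (sg s i + x/a^i))) * exp(-h * cc 1 (sg s m + x/a^m))"

lemma Phi_step:
  fixes a b h :: real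
  assumes ab: "a = cosh (2*h)" "b = sinh (2*h)" and h: "h > 0"
  shows "Phi h a b g cc (Suc m) x (s(Suc m := w)) =
    Qf h a b cc m x s * (mehler_kernel h (sg s m + x/a^m) (w + x/a^Suc m) * g (w + x/a^Suc m))"
proof -
  have b: "b > 0" using ab h by simp
  have a: "a > 0" using ab by simp
  define y where "y = sg s m + x/a^m"
  define s' where "s' = s(Suc m := w)"
  have S2: "(\<Sum>i<Suc m. (sg s' i + x/a^i)\<^sup>2) = (\<Sum>i<m. (sg s i + x/a^i)\<^sup>2) + y\<^sup>2"
    unfolding s'_def y_def by (simp add: upd_sg)
  have S3: "(\<Sum>i<Suc m. cc (Suc m - i) (sg s' i + x/a^i)) = (\<Sum>i<m. cc (Suc m - i) (sg s i + x/a^i)) + cc 1 y"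
    unfolding s'_def y_def by (simp add: upd_sg)
  have V: "sg s' (Suc m) + x/a^Suc m = w + x/a^Suc m" unfolding s'_def by (simp add: upd_sg)
  have P: "(2*pi*b) powr (-(real (Suc m)/2)) = (2*pi*b) powr (-(real m/2)) * (1/sqrt(2*pi*b))"
  proof -
    have "(2*pi*b) powr (-(real (Suc m)/2)) = (2*pi*b) powr (-(real m/2) + -(1/2))"
      by (intro arg_cong[where f="\<lambda>e. (2*pi*b) powr e"]) (simp add: field_simps)
    also have "\<dots> = (2*pi*b) powr (-(real m/2)) * (2*pi*b) powr (-(1/2))"
      by (rule powr_add)
    also have "(2*pi*b) powr (-(1/2)) = 1/sqrt(2*pi*b)"
      using b by (subst powr_minus_divide) (simp add: powr_half_sqrt)
    finally show ?thesis .
  qed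
  have xa: "x/a^m/a = x/a^Suc m" by (simp add: divide_divide_eq_left mult.commute)
  have dd: "w + x/a^Suc m - y/a = w - sg s m/a" unfolding y_def add_divide_distrib xa by simp
  have K: "mehler_kernel h y (w + x/a^Suc m) = 1/sqrt(2*pi*b) * exp(-(1/2)*(a/b)*(w - sg s m/a)\<^sup>2) * exp(-(1/2)*(b/a)*y\<^sup>2)"
    unfolding mehler_split[OF ab h] dd ..
  have E2: "exp(-(1/2)*(b/a)*((\<Sum>i<m. (sg s i + x/a^i)\<^sup>2) + y\<^sup>2)) =
      exp(-(1/2)*(b/a)*(\<Sum>i<m. (sg s i + x/a^i)\<^sup>2)) * exp(-(1/2)*(b/a)*y\<^sup>2)"
    by (simp only: distrib_left exp_add)
  have E3: "exp(-h*((\<Sum>i<m. cc (Suc m - i) (sg s i + x/a^i)) + cc 1 y)) =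
      exp(-h*(\<Sum>i<m. cc (Suc m - i) (sg s i + x/a^i))) * exp(-h * cc 1 y)"
    by (simp only: distrib_left exp_add)
  show ?thesis
    unfolding Phi_def s'_def[symmetric] S2 S3 V P E2 E3 y_def[symmetric] K
    unfolding s'_def Dg_step Qf_def y_def[symmetric]
    by (simp only: mult_ac)
qed

lemma W_1: "W h g cc 1 y = exp (- h * cc 1 y) * U h g y" by simp

lemma Phi_prev:
  "Phi h a b (W h g cc 1) (\<lambda>j. cc (Suc j)) m x s = Qf h a b cc m x s * U h g (sg s m + x/a^m)"
proof -
  have "(\<Sum>i<m. cc (Suc (m - i)) (sg s i + x/a^i)) = (\<Sum>i<m. cc (Suc m - i) (sg s i + x/a^i))"
    by (intro sum.cong) (auto simp: Suc_diff_le)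
  then show ?thesis unfolding Phi_def Qf_def W_1 by (simp only: mult_ac)
qed


lemma U_shift:
  assumes h: "h > 0"
  shows "U h g y = (LINT w|lborel. mehler_kernel h y (w + d) * g (w + d))"
proof -
  have "U h g y = (LINT z|lborel. mehler_kernel h y z * g z)" using h by (simp add: U_def)
  also have "\<dots> = \<bar>1\<bar> *\<^sub>R (LINT w|lborel. mehler_kernel h y (d + 1 * w) * g (d + 1 * w))"
    by (rule lborel_integral_real_affine) simp
  also have "\<dots> = (LINT w|lborel. mehler_kernel h y (w + d) * g (w + d))"
    by (simp add: add.commute)
  finally show ?thesis .
qed

lemma main:
  fixes h a b :: real
  assumes ab: "a = cosh (2*h)" "b = sinh (2*h)" and h: "h > 0"
  shows "g \<in> borel_measurable borel \<Longrightarrow> (\<And>y. \<bar>g y\<bar> \<le> B) \<Longrightarrow>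
    (\<And>j. cc j \<in> borel_measurable borel) \<Longrightarrow> (\<And>j y. \<bar>cc j y\<bar> \<le> C) \<Longrightarrow>
    W h g cc m x = (LINT s|PiM {1..m} (\<lambda>_. lborel). Phi h a b g cc m x s)"
proof (induction m arbitrary: g cc B C x)
  case 0
  have "b > 0" using ab h by simp
  then show ?case
    by (simp add: PiM_empty lebesgue_integral_count_space_finite Phi_def Dg_def sg_def)
next
  case (Suc m)
  have b: "b > 0" using ab h by simp
  have a: "a > 0" using ab by simp
  interpret product_sigma_finite "\<lambda>_::nat. lborel :: real measure" by (rule psf)
  have g'm: "W h g cc 1 \<in> borel_measurable borel"
    by (rule W1_meas[OF Suc.prems(1) Suc.prems(3) h])
  have g'B: "\<And>y. \<bar>W h g cc 1 y\<bar> \<le> exp (h * C) * (B / sqrt(2*pi*b) * sqrt(2*pi*b/a))"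
    by (rule W1_bound[OF ab h Suc.prems(1) Suc.prems(2) Suc.prems(4)])
  have c'm: "\<And>j. (\<lambda>j. cc (Suc j)) j \<in> borel_measurable borel" using Suc.prems(3) by simp
  have c'B: "\<And>j y. \<bar>(\<lambda>j. cc (Suc j)) j y\<bar> \<le> C" using Suc.prems(4) by simp
  have eq: "{1..Suc m} = insert (Suc m) {1..m}" by auto
  have "W h g cc (Suc m) x = W h (W h g cc 1) (\<lambda>j. cc (Suc j)) m x"
    by (simp only: W_shift)
  also have "\<dots> = (LINT s|PiM {1..m} (\<lambda>_. lborel). Phi h a b (W h g cc 1) (\<lambda>j. cc (Suc j)) m x s)"
    by (rule Suc.IH[OF g'm g'B c'm c'B])
  also have "\<dots> = (LINT s|PiM {1..m} (\<lambda>_. lborel). LINT w|lborel. Phi h a b g cc (Suc m) x (s(Suc m := w)))"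
  proof (rule Bochner_Integration.integral_cong[OF refl])
    fix s :: "nat \<Rightarrow> real"
    have "(LINT w|lborel. Phi h a b g cc (Suc m) x (s(Suc m := w)))
        = (LINT w|lborel. Qf h a b cc m x s * (mehler_kernel h (sg s m + x/a^m) (w + x/a^Suc m) * g (w + x/a^Suc m)))"
      by (simp only: Phi_step[OF ab h])
    also have "\<dots> = Qf h a b cc m x s * U h g (sg s m + x/a^m)"
      by (simp only: integral_mult_right_zero U_shift[OF h, of g _ "x/a^Suc m"])
    also have "\<dots> = Phi h a b (W h g cc 1) (\<lambda>j. cc (Suc j)) m x s"
      by (simp only: Phi_prev)
    finally show "Phi h a b (W h g cc 1) (\<lambda>j. cc (Suc j)) m x s = (LINT w|lborel. Phi h a b g cc (Suc m) x (s(Suc m := w)))"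
      by simp
  qed
  also have "\<dots> = (LINT s|PiM {1..Suc m} (\<lambda>_. lborel). Phi h a b g cc (Suc m) x s)"
    unfolding eq
  proof (rule product_integral_insert[symmetric])
    show "integrable (Pi\<^sub>M (insert (Suc m) {1..m}) (\<lambda>_. lborel)) (Phi h a b g cc (Suc m) x)"
      using Phi_integrable[OF a b h Suc.prems(1) Suc.prems(3) Suc.prems(2) Suc.prems(4), where m="Suc m" and x=x] unfolding eq .
  qed auto
  finally show ?case .
qed


lemma rev_sum: "(\<Sum>j=1..(n::nat). G (n - j)) = (\<Sum>i<n. (G i :: real))"
  by (rule sum.reindex_bij_witness[where i="\<lambda>i. n - i" and j="\<lambda>j. n - j"]) auto

lemma rev_sum2: "(\<Sum>j=1..(n::nat). F j (n - j)) = (\<Sum>i<n. (F (n - i) i :: real))"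
  by (rule sum.reindex_bij_witness[where i="\<lambda>i. n - i" and j="\<lambda>j. n - j"]) auto

lemma vgrid_W:
  assumes n: "n \<ge> 1"
  shows "vgrid v0 c t n k = W (t / real n) v0 (\<lambda>j y. c (real j * t / real n) y) k"
proof (induction k)
  case 0 then show ?case by simp
next
  case (Suc k)
  have n0: "real n > 0" using n by simp
  have e1: "tau t n (2*k+2) = real (Suc k) * t / real n"
    unfolding tau_def using n0 by (simp add: field_simps)
  have e2: "- 2 * c (tau t n (2*k+2)) x * (tau t n (2*k+2) - tau t n (2*k+1)) = - (t / real n) * c (real (Suc k) * t / real n) x" for x
    unfolding e1 unfolding tau_def using n0 by (simp add: field_simps)
  have e3: "2 * (tau t n (2*k+1) - tau t n (2*k)) = t / real n"
    unfolding tau_def using n0 by (simp add: field_simps)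
  show ?case unfolding vgrid.simps W.simps e2 e3 Suc.IH ..
qed

lemma vn_vgrid:
  assumes n: "n \<ge> 1" and t: "t > 0"
  shows "vn v0 c t n t x = vgrid v0 c t n n x"
proof -
  obtain k where nk: "n = Suc k" using n by (cases n) auto
  have n0: "real n > 0" using n by simp
  have fl: "nat \<lfloor>t * real n / t\<rfloor> = n" using t by simp
  have kk: "min (n - 1) (nat \<lfloor>t * real n / t\<rfloor>) = k" by (simp only: fl, simp add: nk)
  have nle: "\<not> t \<le> tau t n (2*k+1)"
    unfolding tau_def using t n0 nk by (simp add: field_simps)
  have r: "real (2*k+2) = 2 * real n" using nk by simp
  have tt: "tau t n (2*k+2) = t" unfolding tau_def r using n0 by simp
  have e: "t - tau t n (2*k+1) = tau t n (2*k+2) - tau t n (2*k+1)" unfolding tt ..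
  have vv: "vgrid v0 c t n n = vgrid v0 c t n (Suc k)" using nk by simp
  show ?thesis unfolding vn_def Let_def kk if_not_P[OF nle] e vv vgrid.simps ..
qed


lemma sg_eta: "(\<lambda>j. if j = 0 then 0 else s j) = sg s"
  by (simp add: sg_def fun_eq_iff)

theorem proposition1:
  fixes c :: "real \<Rightarrow> real \<Rightarrow> real" and v0 :: "real \<Rightarrow> real"
    and t :: real and n :: nat and x :: real
  assumes c_cont: "continuous_on ({0..} \<times> UNIV) (\<lambda>(s, y). c s y)"
    and c_bdd: "bounded ((\<lambda>(s, y). c s y) ` ({0..} \<times> UNIV))"
    and v0_cont: "continuous_on UNIV v0"
    and v0_vanish: "(v0 \<longlongrightarrow> 0) at_infinity"
    and t_pos: "t > 0" and n_pos: "n \<ge> 1"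
  shows "vn v0 c t n t x =
    (LINT \<sigma>' | PiM {1..n} (\<lambda>_. lborel).
       (let \<sigma> = (\<lambda>j. if j = 0 then 0 else \<sigma>' j);
            a = cosh (2 * t / real n); b = sinh (2 * t / real n) in
        (2 * pi * b) powr (- (real n / 2)) *
        v0 (\<sigma> n + x / a ^ n) *
        exp (- (1/2) * (a / b) * (\<Sum>j=1..n. (\<sigma> (n - j + 1) - \<sigma> (n - j) / a)\<^sup>2)) *
        exp (- (1/2) * (b / a) * (\<Sum>j=1..n. (\<sigma> (n - j) + x / a ^ (n - j))\<^sup>2)) *
        exp (- (t / real n) * (\<Sum>j=1..n. c (real j * t / real n) (\<sigma> (n - j) + x / a ^ (n - j))))))"
proof -
  define h where "h = t / real n"
  define a where "a = cosh (2 * t / real n)"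
  define b where "b = sinh (2 * t / real n)"
  define cc where "cc = (\<lambda>j y. c (real j * t / real n) y)"
  have n0: "real n > 0" using n_pos by simp
  have h: "h > 0" unfolding h_def using t_pos n0 by simp
  have ab: "a = cosh (2*h)" "b = sinh (2*h)" unfolding a_def b_def h_def by simp_all
  obtain B where vB: "\<And>y. \<bar>v0 y\<bar> \<le> B"
  proof -
    have "eventually (\<lambda>y. dist (v0 y) 0 < 1) at_infinity"
      using v0_vanish by (rule tendstoD) simp
    then obtain R where R: "\<And>y::real. R \<le> norm y \<Longrightarrow> dist (v0 y) 0 < 1"
      unfolding eventually_at_infinity by blast
    have "compact (v0 ` cball 0 R)"
      by (rule compact_continuous_image[OF continuous_on_subset[OF v0_cont]]) auto
    then obtain M where M: "\<And>z. z \<in> v0 ` cball 0 R \<Longrightarrow> norm z \<le> M"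
      using compact_imp_bounded bounded_iff by metis
    have "\<bar>v0 y\<bar> \<le> max M 1" for y
    proof (cases "R \<le> norm y")
      case True then show ?thesis using R[of y] by simp
    next
      case False then have "y \<in> cball 0 R" by simp
      then show ?thesis using M[of "v0 y"] by simp
    qed
    then show ?thesis by (rule that)
  qed
  obtain C where cB: "\<And>s y. s \<ge> 0 \<Longrightarrow> \<bar>c s y\<bar> \<le> C"
  proof -
    obtain M where M: "\<And>z. z \<in> (\<lambda>(s, y). c s y) ` ({0..} \<times> UNIV) \<Longrightarrow> norm z \<le> M"
      using c_bdd bounded_iff by metis
    have "\<bar>c s y\<bar> \<le> M" if "s \<ge> 0" for s y
      using M[of "c s y"] that by force
    then show ?thesis by (rule that)
  qed
  have ccB: "\<And>j y. \<bar>cc j y\<bar> \<le> C" unfolding cc_def using t_pos n0 by (intro cB) simp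
  have ccm: "\<And>j. cc j \<in> borel_measurable borel"
  proof -
    fix j :: nat
    have "continuous_on UNIV (\<lambda>y. (\<lambda>(s, y). c s y) (real j * t / real n, y))"
      by (rule continuous_on_compose2[OF c_cont]) (use t_pos n0 in \<open>auto intro!: continuous_intros\<close>)
    then show "cc j \<in> borel_measurable borel" unfolding cc_def
      by (intro borel_measurable_continuous_onI) simp
  qed
  have v0m: "v0 \<in> borel_measurable borel" by (rule borel_measurable_continuous_onI[OF v0_cont])
  have "vn v0 c t n t x = W h v0 cc n x"
    unfolding vn_vgrid[OF n_pos t_pos] vgrid_W[OF n_pos] h_def cc_def ..
  also have "\<dots> = (LINT s|PiM {1..n} (\<lambda>_. lborel). Phi h a b v0 cc n x s)"
    by (rule main[OF ab h v0m vB ccm ccB])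
  finally have X: "vn v0 c t n t x = (LINT s|PiM {1..n} (\<lambda>_. lborel). Phi h a b v0 cc n x s)" .
  have pw: "\<And>\<sigma>'. Phi h a b v0 cc n x \<sigma>' = (let \<sigma> = (\<lambda>j. if j = 0 then 0 else \<sigma>' j);
            a = cosh (2 * t / real n); b = sinh (2 * t / real n) in
        (2 * pi * b) powr (- (real n / 2)) *
        v0 (\<sigma> n + x / a ^ n) *
        exp (- (1/2) * (a / b) * (\<Sum>j=1..n. (\<sigma> (n - j + 1) - \<sigma> (n - j) / a)\<^sup>2)) *
        exp (- (1/2) * (b / a) * (\<Sum>j=1..n. (\<sigma> (n - j) + x / a ^ (n - j))\<^sup>2)) *
        exp (- (t / real n) * (\<Sum>j=1..n. c (real j * t / real n) (\<sigma> (n - j) + x / a ^ (n - j)))))"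
  proof -
    fix \<sigma>' :: "nat \<Rightarrow> real"
    have s1: "(\<Sum>j=1..n. (sg \<sigma>' (n - j + 1) - sg \<sigma>' (n - j)/a)\<^sup>2) = (\<Sum>i<n. (sg \<sigma>' (i+1) - sg \<sigma>' i/a)\<^sup>2)"
      by (rule rev_sum)
    have s2: "(\<Sum>j=1..n. (sg \<sigma>' (n - j) + x/a^(n - j))\<^sup>2) = (\<Sum>i<n. (sg \<sigma>' i + x/a^i)\<^sup>2)"
      by (rule rev_sum)
    have s3: "(\<Sum>j=1..n. c (real j*t/real n) (sg \<sigma>' (n - j) + x/a^(n - j))) = (\<Sum>i<n. cc (n - i) (sg \<sigma>' i + x/a^i))"
      unfolding cc_def by (rule rev_sum2)
    show "Phi h a b v0 cc n x \<sigma>' = (let \<sigma> = (\<lambda>j. if j = 0 then 0 else \<sigma>' j);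
            a = cosh (2 * t / real n); b = sinh (2 * t / real n) in
        (2 * pi * b) powr (- (real n / 2)) *
        v0 (\<sigma> n + x / a ^ n) *
        exp (- (1/2) * (a / b) * (\<Sum>j=1..n. (\<sigma> (n - j + 1) - \<sigma> (n - j) / a)\<^sup>2)) *
        exp (- (1/2) * (b / a) * (\<Sum>j=1..n. (\<sigma> (n - j) + x / a ^ (n - j))\<^sup>2)) *
        exp (- (t / real n) * (\<Sum>j=1..n. c (real j * t / real n) (\<sigma> (n - j) + x / a ^ (n - j)))))"
      unfolding sg_eta Let_def a_def[symmetric] b_def[symmetric] h_def[symmetric] s1 s2 s3 Phi_def Dg_def ..
  qed
  show ?thesis unfolding X by (rule Bochner_Integration.integral_cong[OF refl pw])
qed

end
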